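(* Let $M$ be a finite $\mathbb{Z}[D]$-module. Then \[\frac{|M|\,|M^D|^2}{|M^R|\,|M^\Sigma|^2}=\frac{\hat h^0(D,M)}{\hat h^{-1}(D,M)},\] and consequently \[\mathcal C_\Theta(M)=\left(\frac{\hat h^{-1}(D,M)}{\hat h^0(D,M)}\right)^2=\frac{\hat h^{-1}(\Theta,M)}{\hat h^0(\Theta,M)}.\] If moreover $M\cong M^\vee$ as $\mathbb{Z}[D]$-modules, then $\frac{|M|\,|M^D|^2}{|M^R|\,|M^\Sigma|^2}=\mathcal C_\Theta(M)=1$.
   Context: Let $q>1$ be an odd integer, $D=\langle\rho,\sigma:\rho^q=\sigma^2=1,\ \sigma\rho\sigma^{-1}=\rho^{-1}\rangle$ the dihedral group of order $2q$, $R=\langle\rho\rangle$, $\Sigma=\langle\sigma\rangle$, and $\Theta=1+2D-R-2\Sigma$, i.e. the $D$-Brauer relation $\sum_H n_HH$ with $n_{\{1\}}=1$, $n_D=2$, $n_R=-1$, $n_\Sigma=-2$ and $n_H=0$ for all other subgroups. For a finitely generated $\mathbb{Z}[D]$-module $M$, write $M_{\mathrm{tors}}$ for its $\mathbb{Z}$-torsion subgroup and $M_{\mathrm{tf}}=M/M_{\mathrm{tors}}$; the regulator constant is $\mathcal C_\Theta(M)=\prod_{H\le D}\bigl(|M_{\mathrm{tors}}^H|^{-2}\det(\tfrac{1}{|H|}\langle\cdot,\cdot\rangle|_{(M^H)_{\mathrm{tf}}})\bigr)^{n_H}$, where $\langle\cdot,\cdot\rangle:M\times M\to\mathscr L$ is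 any $D$-invariant $\mathbb{Z}$-bilinear pairing into a field $\mathscr L\supseteq\mathbb{Q}$ non-degenerate on $M_{\mathrm{tf}}$ and the determinant is taken on a $\mathbb{Z}$-basis of $(M^H)_{\mathrm{tf}}$ (independent of the pairing; for finite $M$ it equals $\prod_H|M^H|^{-2n_H}$). For $i\in\mathbb{Z}$ and $H\le D$, $\hat H^i(H,M)$ is Tate cohomology, $\hat h^i(H,M)=|\hat H^i(H,M)|$, $\hat h^i(\Theta,M)=\prod_H\hat h^i(H,M)^{n_H}$. For finite $M$, $M^\vee=\mathrm{Hom}(M,\mathbb{Q}/\mathbb{Z})$ with action $(g\psi)(m)=\psi(g^{-1}m)$. *)

theory Defs
  imports Complex_Main
begin

quotient_type qz = rat / "\<lambda>x y. x - y \<in> \<int>"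
  morphisms rep_qz abs_qz
proof (rule equivpI)
  show "reflp (\<lambda>x y::rat. x - y \<in> \<int>)" by (simp add: reflp_def)
  show "symp (\<lambda>x y::rat. x - y \<in> \<int>)"
    unfolding symp_def by (metis Ints_minus minus_diff_eq)
  show "transp (\<lambda>x y::rat. x - y \<in> \<int>)"
    unfolding transp_def by (metis Ints_add diff_add_cancel add_diff_eq)
qed

instantiation qz :: ab_group_add
begin
lift_definition zero_qz :: qz is "0::rat" .
lift_definition plus_qz :: "qz \<Rightarrow> qz \<Rightarrow> qz" is "(+)"
  by (metis Ints_add add_diff_add)
lift_definition uminus_qz :: "qz \<Rightarrow> qz" is uminus
  by (metis Ints_minus minus_diff_eq minus_diff_minus)
lift_definition minus_qz :: "qz \<Rightarrow> qz \<Rightarrow> qz" is "(-)"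
  by (metis Ints_diff diff_diff_eq2 add_diff_eq diff_add_eq diff_diff_add
      add.commute diff_diff_eq)
instance
  by standard (transfer; simp add: algebra_simps)+
end

text \<open>The element rho^a sigma^b of D is encoded as the pair (a,b), with a < q, b < 2.
  A Z[D]-module structure on a finite abelian group 'm is given by the additive maps
  r (action of rho) and s (action of sigma) satisfying the defining relations of D.\<close>

definition Dgrp :: "nat \<Rightarrow> (nat \<times> nat) set" where
  "Dgrp q = {(a, b). a < q \<and> b < 2}"

definition Rgrp :: "nat \<Rightarrow> (nat \<times> nat) set" where
  "Rgrp q = {(a, b). a < q \<and> b = 0}"

definition Sgrp :: "(nat \<times> nat) set" where
  "Sgrp = {(0, 0), (0, 1)}"

definition Triv :: "(nat \<times> nat) set" where
  "Triv = {(0, 0)}"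

definition dact :: "('m \<Rightarrow> 'm) \<Rightarrow> ('m \<Rightarrow> 'm) \<Rightarrow> nat \<times> nat \<Rightarrow> 'm \<Rightarrow> 'm" where
  "dact r s g x = (r ^^ fst g) ((s ^^ snd g) x)"

definition dinv :: "nat \<Rightarrow> nat \<times> nat \<Rightarrow> nat \<times> nat" where
  "dinv q g = (if snd g = 0 then ((q - fst g) mod q, 0) else (fst g, 1))"

definition is_D_module :: "nat \<Rightarrow> ('m::ab_group_add \<Rightarrow> 'm) \<Rightarrow> ('m \<Rightarrow> 'm) \<Rightarrow> bool" where
  "is_D_module q r s \<longleftrightarrow>
     (\<forall>x y. r (x + y) = r x + r y) \<and> (\<forall>x y. s (x + y) = s x + s y) \<and>
     (\<forall>x. (r ^^ q) x = x) \<and> (\<forall>x. s (s x) = x) \<and>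
     (\<forall>x. s (r (s x)) = (r ^^ (q - 1)) x)"

definition fixedpts :: "('m \<Rightarrow> 'm) \<Rightarrow> ('m \<Rightarrow> 'm) \<Rightarrow> (nat \<times> nat) set \<Rightarrow> 'm set" where
  "fixedpts r s H = {x. \<forall>g\<in>H. dact r s g x = x}"

definition normmap :: "('m::ab_group_add \<Rightarrow> 'm) \<Rightarrow> ('m \<Rightarrow> 'm) \<Rightarrow> (nat \<times> nat) set \<Rightarrow> 'm \<Rightarrow> 'm" where
  "normmap r s H x = (\<Sum>g\<in>H. dact r s g x)"

inductive_set gen_subgroup :: "'a::ab_group_add set \<Rightarrow> 'a set" for S where
  zero: "0 \<in> gen_subgroup S"
| gen: "x \<in> S \<Longrightarrow> x \<in> gen_subgroup S"
| diff: "x \<in> gen_subgroup S \<Longrightarrow> y \<in> gen_subgroup S \<Longrightarrow> x - y \<in> gen_subgroup S"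

definition augment :: "('m::ab_group_add \<Rightarrow> 'm) \<Rightarrow> ('m \<Rightarrow> 'm) \<Rightarrow> (nat \<times> nat) set \<Rightarrow> 'm set" where
  "augment r s H = gen_subgroup {dact r s g x - x | g x. g \<in> H}"

definition quot_card :: "'m::ab_group_add set \<Rightarrow> 'm set \<Rightarrow> nat" where
  "quot_card A B = card ((\<lambda>x. (+) x ` B) ` A)"

text \<open>hat h^0(H,M) = |M^H / N_H M| and hat h^{-1}(H,M) = |ker N_H / I_H M|.\<close>
definition tate0 :: "('m::ab_group_add \<Rightarrow> 'm) \<Rightarrow> ('m \<Rightarrow> 'm) \<Rightarrow> (nat \<times> nat) set \<Rightarrow> nat" where
  "tate0 r s H = quot_card (fixedpts r s H) (range (normmap r s H))"

definition tate_m1 :: "('m::ab_group_add \<Rightarrow> 'm) \<Rightarrow> ('m \<Rightarrow> 'm) \<Rightarrow> (nat \<times> nat) set \<Rightarrow> nat" where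
  "tate_m1 r s H = quot_card {x. normmap r s H x = 0} (augment r s H)"

definition theta_prod :: "nat \<Rightarrow> ((nat \<times> nat) set \<Rightarrow> real) \<Rightarrow> real" where
  "theta_prod q f = f Triv * f (Dgrp q) ^ 2 / (f (Rgrp q) * f Sgrp ^ 2)"

text \<open>Regulator constant of a finite module: prod_H (|M^H|^{-2} * 1)^{n_H}
  (torsion-free part is zero, so the determinant factor is the empty determinant 1).\<close>
definition reg_const_finite :: "nat \<Rightarrow> ('m::ab_group_add \<Rightarrow> 'm) \<Rightarrow> ('m \<Rightarrow> 'm) \<Rightarrow> real" where
  "reg_const_finite q r s = theta_prod q (\<lambda>H. 1 / real (card (fixedpts r s H)) ^ 2)"

definition dual_carrier :: "('m::ab_group_add \<Rightarrow> qz) set" where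
  "dual_carrier = {\<psi>. \<forall>x y. \<psi> (x + y) = \<psi> x + \<psi> y}"

definition dual_act :: "nat \<Rightarrow> ('m \<Rightarrow> 'm) \<Rightarrow> ('m \<Rightarrow> 'm) \<Rightarrow> nat \<times> nat \<Rightarrow> ('m \<Rightarrow> qz) \<Rightarrow> ('m \<Rightarrow> qz)" where
  "dual_act q r s g \<psi> = (\<lambda>m. \<psi> (dact r s (dinv q g) m))"

definition iso_to_dual :: "nat \<Rightarrow> ('m::ab_group_add \<Rightarrow> 'm) \<Rightarrow> ('m \<Rightarrow> 'm) \<Rightarrow> bool" where
  "iso_to_dual q r s \<longleftrightarrow> (\<exists>f :: 'm \<Rightarrow> ('m \<Rightarrow> qz).
      bij_betw f UNIV dual_carrier \<and>
      (\<forall>x y. f (x + y) = (\<lambda>m. f x m + f y m)) \<and>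
      (\<forall>g\<in>Dgrp q. \<forall>x. f (dact r s g x) = dual_act q r s g (f x)))"

end

theory Submission
  imports Defs "HOL-Library.Product_Plus"
begin


definition sg :: "'a::ab_group_add set \<Rightarrow> bool" where
  "sg B \<longleftrightarrow> 0 \<in> B \<and> (\<forall>x\<in>B. \<forall>y\<in>B. x - y \<in> B)"

lemma sg_0: "sg B \<Longrightarrow> 0 \<in> B" by (simp add: sg_def)
lemma sg_diff: "sg B \<Longrightarrow> x \<in> B \<Longrightarrow> y \<in> B \<Longrightarrow> x - y \<in> B" by (simp add: sg_def)
lemma sg_uminus: "sg B \<Longrightarrow> x \<in> B \<Longrightarrow> - x \<in> B"
  using sg_diff[of B 0 x] sg_0[of B] by simp
lemma sg_add: "sg B \<Longrightarrow> x \<in> B \<Longrightarrow> y \<in> B \<Longrightarrow> x + y \<in> B"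
  using sg_diff[of B x "- y"] sg_uminus[of B y] by simp

definition addf :: "('a::ab_group_add \<Rightarrow> 'b::ab_group_add) \<Rightarrow> bool" where
  "addf f \<longleftrightarrow> (\<forall>x y. f (x + y) = f x + f y)"

lemma addf_0: "addf f \<Longrightarrow> f 0 = 0"
  unfolding addf_def by (drule spec[of _ 0], drule spec[of _ 0]) simp
lemma addf_uminus: "addf f \<Longrightarrow> f (- x) = - f x"
proof -
  assume a: "addf f"
  have "f (x + - x) = f x + f (- x)" using a unfolding addf_def by blast
  then have "f x + f (- x) = 0" using addf_0[OF a] by simp
  then show ?thesis by (metis add.commute add_eq_0_iff2 minus_unique)
qed
lemma addf_diff: "addf f \<Longrightarrow> f (x - y) = f x - f y"
  using addf_uminus[of f y] unfolding addf_def by (metis diff_conv_add_uminus)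
lemma addf_add: "addf f \<Longrightarrow> f (x + y) = f x + f y"
  unfolding addf_def by simp
lemma addf_sum: "addf f \<Longrightarrow> f (sum g A) = (\<Sum>i\<in>A. f (g i))"
  by (induction A rule: infinite_finite_induct) (auto simp: addf_0 addf_add)

lemma sg_range: "addf f \<Longrightarrow> sg (range f)"
  unfolding sg_def
proof (intro conjI ballI)
  assume f: "addf f"
  show "0 \<in> range f" using addf_0[OF f] by (metis rangeI)
  fix x y assume "x \<in> range f" "y \<in> range f"
  then obtain a b where "x = f a" "y = f b" by auto
  then show "x - y \<in> range f" using addf_diff[OF f, of a b] by (metis rangeI)
qed
lemma sg_image: "addf f \<Longrightarrow> sg G \<Longrightarrow> sg (f ` G)"
  unfolding sg_def by (force simp: addf_0 addf_diff[symmetric])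
lemma sg_ker: "addf f \<Longrightarrow> sg G \<Longrightarrow> sg {x\<in>G. f x = 0}"
  unfolding sg_def by (auto simp: addf_0 addf_diff)
lemma sg_Int: "sg A \<Longrightarrow> sg B \<Longrightarrow> sg (A \<inter> B)"
  unfolding sg_def by auto
lemma sg_UNIV: "sg UNIV" by (simp add: sg_def)

lemma kerim:
  fixes f :: "'a::ab_group_add \<Rightarrow> 'b::ab_group_add"
  assumes fin: "finite G" and G: "sg G" and f: "addf f"
  shows "card G = card (f ` G) * card {x\<in>G. f x = 0}"
proof -
  let ?K = "{x\<in>G. f x = 0}"
  have U: "G = (\<Union>y\<in>f ` G. {x\<in>G. f x = y})" by auto
  have c: "card {x\<in>G. f x = y} = card ?K" if yy: "y \<in> f ` G" for y
  proof -
    obtain x0 where x0: "x0 \<in> G" "f x0 = y" using yy by auto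
    have "bij_betw (\<lambda>x. x - x0) {x\<in>G. f x = y} ?K"
    proof (rule bij_betw_byWitness[where f' = "\<lambda>x. x + x0"])
      show "(\<lambda>x. x - x0) ` {x \<in> G. f x = y} \<subseteq> ?K"
        using x0 G f by (auto simp: sg_diff addf_diff)
      show "(\<lambda>x. x + x0) ` ?K \<subseteq> {x \<in> G. f x = y}"
        using x0 G f by (auto simp: sg_add addf_add)
    qed auto
    then show ?thesis by (rule bij_betw_same_card)
  qed
  have "card G = (\<Sum>y\<in>f ` G. card {x\<in>G. f x = y})"
    by (subst U, rule card_UN_disjoint) (use fin in auto)
  also have "\<dots> = card (f ` G) * card ?K" using c by simp
  finally show ?thesis .
qed

lemma quot_card_mult:
  fixes A B :: "'a::ab_group_add set"
  assumes fin: "finite A" and A: "sg A" and B: "sg B" and BA: "B \<subseteq> A"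
  shows "quot_card A B * card B = card A"
proof -
  let ?C = "(\<lambda>x. (+) x ` B) ` A"
  have U: "\<Union>?C = A"
  proof
    show "\<Union>?C \<subseteq> A" using A BA by (auto intro: sg_add)
    show "A \<subseteq> \<Union>?C"
    proof
      fix x assume "x \<in> A"
      then show "x \<in> \<Union>?C" using sg_0[OF B] by (auto intro!: bexI[of _ x] image_eqI[of x _ 0])
    qed
  qed
  have "card B * card ?C = card (\<Union>?C)"
  proof (rule card_partition)
    show "finite ?C" using fin by simp
    show "finite (\<Union>?C)" using U fin by simp
    show "\<And>c. c \<in> ?C \<Longrightarrow> card c = card B"
      by (auto simp: card_image inj_on_def)
    show "\<And>c1 c2. c1 \<in> ?C \<Longrightarrow> c2 \<in> ?C \<Longrightarrow> c1 \<noteq> c2 \<Longrightarrow> c1 \<inter> c2 = {}"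
    proof -
      fix c1 c2 assume "c1 \<in> ?C" "c2 \<in> ?C" and ne: "c1 \<noteq> c2"
      then obtain x y where c12: "c1 = (+) x ` B" "c2 = (+) y ` B" by auto
      with ne have xy: "(+) x ` B \<noteq> (+) y ` B" by simp
      show "c1 \<inter> c2 = {}"
      proof (rule ccontr)
      assume "c1 \<inter> c2 \<noteq> {}"
      then obtain z where z1: "z \<in> (+) x ` B" and z2: "z \<in> (+) y ` B" using c12 by auto
      obtain b1 where b1: "b1 \<in> B" "z = x + b1" using z1 by auto
      obtain b2 where b2: "b2 \<in> B" "z = y + b2" using z2 by auto
      have "(+) x ` B \<subseteq> (+) y ` B"
      proof
        fix w assume "w \<in> (+) x ` B"
        then obtain b where b: "b \<in> B" "w = x + b" by auto
        have "w = y + (b2 - b1 + b)" using b b1 b2 by (simp add: algebra_simps)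
        moreover have "b2 - b1 + b \<in> B" using B b b1 b2 by (simp add: sg_add sg_diff)
        ultimately show "w \<in> (+) y ` B" by auto
      qed
      moreover have "(+) y ` B \<subseteq> (+) x ` B"
      proof
        fix w assume "w \<in> (+) y ` B"
        then obtain b where b: "b \<in> B" "w = y + b" by auto
        have "w = x + (b1 - b2 + b)" using b b1 b2 by (simp add: algebra_simps)
        moreover have "b1 - b2 + b \<in> B" using B b b1 b2 by (simp add: sg_add sg_diff)
        ultimately show "w \<in> (+) x ` B" by auto
      qed
      ultimately show False using xy by blast
    qed
    qed
  qed
  then show ?thesis using U by (simp add: quot_card_def mult.commute)
qed

lemma sumset_card:
  fixes A B :: "'a::ab_group_add set"
  assumes fA: "finite A" and fB: "finite B" and A: "sg A" and B: "sg B"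
  shows "card {a + b | a b. a \<in> A \<and> b \<in> B} * card (A \<inter> B) = card A * card B"
proof -
  let ?f = "\<lambda>p::'a\<times>'a. fst p + snd p"
  have f: "addf ?f" by (simp add: addf_def algebra_simps)
  have G: "sg (A \<times> B)" using A B unfolding sg_def by (auto simp: zero_prod_def)
  have "card (A \<times> B) = card (?f ` (A \<times> B)) * card {x\<in>A \<times> B. ?f x = 0}"
    by (rule kerim) (use fA fB G f in auto)
  moreover have "?f ` (A \<times> B) = {a + b | a b. a \<in> A \<and> b \<in> B}" by force
  moreover have "card {x\<in>A \<times> B. ?f x = 0} = card (A \<inter> B)"
  proof -
    have "{x\<in>A \<times> B. ?f x = 0} = (\<lambda>a. (a, - a)) ` (A \<inter> B)"
    proof
      show "{x\<in>A \<times> B. ?f x = 0} \<subseteq> (\<lambda>a. (a, - a)) ` (A \<inter> B)"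
      proof clarify
        fix a b assume "a \<in> A" "b \<in> B" "fst (a, b) + snd (a, b) = 0"
        then show "(a, b) \<in> (\<lambda>a. (a, - a)) ` (A \<inter> B)"
          using sg_uminus[OF B, of b] by (auto simp: add_eq_0_iff2 intro!: image_eqI[of _ _ a])
      qed
      show "(\<lambda>a. (a, - a)) ` (A \<inter> B) \<subseteq> {x\<in>A \<times> B. ?f x = 0}"
        using sg_uminus[OF B] by auto
    qed
    then show ?thesis by (simp add: card_image inj_on_def)
  qed
  ultimately show ?thesis by (simp add: card_cartesian_product)
qed

lemma gen_subgroup_sg: "sg (gen_subgroup S)"
  unfolding sg_def by (auto intro: gen_subgroup.intros)
lemma gen_subgroup_le: "S \<subseteq> T \<Longrightarrow> sg T \<Longrightarrow> gen_subgroup S \<subseteq> T"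
proof
  fix x assume a: "S \<subseteq> T" "sg T" and "x \<in> gen_subgroup S"
  from this(3) show "x \<in> T" by (induction rule: gen_subgroup.induct) (use a in \<open>auto simp: sg_0 sg_diff\<close>)
qed
lemma gen_subgroup_ge: "S \<subseteq> gen_subgroup S"
  by (auto intro: gen_subgroup.intros)




primrec nmul :: "nat \<Rightarrow> 'a::ab_group_add \<Rightarrow> 'a" where
  "nmul 0 x = 0"
| "nmul (Suc n) x = x + nmul n x"

lemma nmul_add: "nmul (m + n) x = nmul m x + nmul n x"
  by (induction m) (simp_all add: add.assoc)
lemma nmul_mult: "nmul (m * n) x = nmul m (nmul n x)"
  by (induction m) (simp_all add: nmul_add)
lemma addf_nmul: "addf f \<Longrightarrow> f (nmul n x) = nmul n (f x)"
  by (induction n) (simp_all add: addf_0 addf_add)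
lemma nmul_addf: "addf (nmul n)"
  unfolding addf_def by (induction n) (simp_all add: algebra_simps)
lemma nmul_sg: "sg B \<Longrightarrow> x \<in> B \<Longrightarrow> nmul n x \<in> B"
  by (induction n) (simp_all add: sg_0 sg_add)

lemma qz_nmul: "nmul n (abs_qz x) = abs_qz (of_nat n * x)"
proof (induction n)
  case 0 then show ?case by (simp add: zero_qz_def)
next
  case (Suc n) then show ?case by (simp add: plus_qz.abs_eq algebra_simps)
qed

lemma qz_eq0: "abs_qz x = 0 \<longleftrightarrow> x \<in> \<int>"
  by (simp add: zero_qz_def qz.abs_eq_iff)

lemma tors_sub:
  assumes n: "n > 0"
  shows "{t::qz. nmul n t = 0} \<subseteq> (\<lambda>j::int. abs_qz (of_int j / of_nat n)) ` {0..<int n}"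
proof
  fix t :: qz assume "t \<in> {t. nmul n t = 0}"
  then have t: "nmul n t = 0" by simp
  obtain x where x: "t = abs_qz x" by (rule qz.abs_induct[of "\<lambda>t. (\<forall>x. t = abs_qz x \<longrightarrow> thesis) \<longrightarrow> thesis", rule_format]) auto
  then have "of_nat n * x \<in> \<int>" using t by (simp add: qz_nmul qz_eq0)
  then obtain k where k: "of_nat n * x = of_int k" by (metis Ints_cases)
  define j where "j = k mod int n"
  have j: "j \<in> {0..<int n}" using n by (simp add: j_def)
  have "x - of_int j / of_nat n = of_int (k div int n)"
  proof -
    have "k = int n * (k div int n) + j" by (simp add: j_def)
    then have "of_int k = (of_nat n :: rat) * of_int (k div int n) + of_int j"
      by (metis of_int_add of_int_mult of_int_of_nat_eq)
    then show ?thesis using k n by (simp add: field_simps)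
  qed
  then have "abs_qz x = abs_qz (of_int j / of_nat n)" by (simp add: qz.abs_eq_iff)
  then show "t \<in> (\<lambda>j::int. abs_qz (of_int j / of_nat n)) ` {0..<int n}" using x j by auto
qed

lemma tors_card:
  assumes n: "n > 0"
  shows "finite {t::qz. nmul n t = 0} \<and> card {t::qz. nmul n t = 0} \<le> n"
proof -
  have "card ((\<lambda>j::int. abs_qz (of_int j / of_nat n)) ` {0..<int n}) \<le> n"
    using card_image_le[of "{0..<int n}" "\<lambda>j::int. abs_qz (of_int j / of_nat n)"] by simp
  then show ?thesis using tors_sub[OF n] by (meson card_mono finite_atLeastLessThan_int finite_imageI finite_subset le_trans)
qed

definition FF :: "'m::ab_group_add set \<Rightarrow> ('m \<Rightarrow> qz) set" where
  "FF B = {\<psi>\<in>dual_carrier. \<forall>b\<in>B. \<psi> b = 0}"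

lemma dc_addf: "\<psi> \<in> dual_carrier \<Longrightarrow> addf \<psi>"
  by (simp add: dual_carrier_def addf_def)

lemma nmul_period:
  fixes a :: "'m::{ab_group_add,finite}"
  shows "\<exists>n>0. nmul n a = 0"
proof -
  have "\<not> inj (\<lambda>i::nat. nmul i a)"
    using inj_on_finite[of "\<lambda>i::nat. nmul i a" UNIV UNIV] by auto
  then obtain i j where ij: "i \<noteq> j" "nmul i a = nmul j a" unfolding inj_def by auto
  show ?thesis
  proof (cases "i < j")
    case True
    have "nmul j a = nmul (j - i) a + nmul i a" using True nmul_add[of "j - i" i a] by simp
    then show ?thesis using ij True by (intro exI[of _ "j - i"]) simp
  next
    case False
    then have "j < i" using ij by simp
    have "nmul i a = nmul (i - j) a + nmul j a" using \<open>j < i\<close> nmul_add[of "i - j" j a] by simp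
    then show ?thesis using ij \<open>j < i\<close> by (intro exI[of _ "i - j"]) simp
  qed
qed

lemma count_le:
  fixes B C :: "'m::{ab_group_add,finite} set"
  assumes fin: "finite (dual_carrier :: ('m \<Rightarrow> qz) set)"
  shows "sg B \<Longrightarrow> sg C \<Longrightarrow> B \<subseteq> C \<Longrightarrow>
    card (FF B :: ('m\<Rightarrow>qz) set) * card B \<le> card (FF C :: ('m\<Rightarrow>qz) set) * card C"
proof (induction "card C - card B" arbitrary: B rule: less_induct)
  case less
  note B = \<open>sg B\<close> and C = \<open>sg C\<close> and BC = \<open>B \<subseteq> C\<close>
  show ?case
  proof (cases "B = C")
    case True then show ?thesis by simp
  next
    case False
    then obtain a where aC: "a \<in> C" and aB: "a \<notin> B" using BC by auto
    have ex: "\<exists>n. n > 0 \<and> nmul n a \<in> B" using nmul_period[of a] sg_0[OF B] by auto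
    define n where "n = (LEAST n. n > 0 \<and> nmul n a \<in> B)"
    have n: "n > 0" "nmul n a \<in> B" using LeastI_ex[OF ex] unfolding n_def by auto
    have nmin: "nmul k a \<notin> B" if "0 < k" "k < n" for k
      using not_less_Least[of k "\<lambda>n. n > 0 \<and> nmul n a \<in> B"] that unfolding n_def by auto
    define B' where "B' = {b + nmul k a | b k. b \<in> B}"
    have B': "sg B'"
      unfolding sg_def
    proof (intro conjI ballI)
      show "0 \<in> B'" unfolding B'_def using sg_0[OF B] by (auto intro!: exI[of _ 0])
      fix x y assume "x \<in> B'" "y \<in> B'"
      then obtain b1 k1 b2 k2 where x: "x = b1 + nmul k1 a" "b1 \<in> B"
        and y: "y = b2 + nmul k2 a" "b2 \<in> B" unfolding B'_def by auto
      have e: "nmul (k2 * n) a = nmul (k2 * (n - 1)) a + nmul k2 a"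
        using n(1) nmul_add[of "k2 * (n - 1)" k2 a]
        by (metis Suc_diff_1 mult_Suc_right add.commute)
      have "x - y = (b1 - b2 - nmul (k2 * n) a) + nmul (k1 + k2 * (n - 1)) a"
        using x y e by (simp add: nmul_add algebra_simps)
      moreover have "b1 - b2 - nmul (k2 * n) a \<in> B"
        using x y n B nmul_mult[of k2 n a] by (simp add: sg_diff nmul_sg)
      ultimately show "x - y \<in> B'" unfolding B'_def by blast
    qed
    have BB': "B \<subseteq> B'" unfolding B'_def by (force intro: exI[of _ 0])
    have aB': "a \<in> B'" unfolding B'_def using sg_0[OF B] by (force intro!: exI[of _ 0] exI[of _ 1])
    have B'C: "B' \<subseteq> C" unfolding B'_def using BC aC C by (auto intro!: sg_add nmul_sg)
    have lt: "card C - card B' < card C - card B"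
    proof -
      have "B \<subset> B'" using BB' aB' aB by blast
      then have "card B < card B'" by (intro psubset_card_mono) simp_all
      moreover have "card B' \<le> card C" using B'C by (simp add: card_mono)
      ultimately show ?thesis by linarith
    qed
    have IH: "card (FF B' :: ('m\<Rightarrow>qz) set) * card B' \<le> card (FF C :: ('m\<Rightarrow>qz) set) * card C"
      using less.hyps[OF lt B' C B'C] .
    have nB: "n * card B \<le> card B'"
    proof -
      have inj: "inj_on (\<lambda>(b, k). b + nmul k a) (B \<times> {..<n})"
      proof (rule inj_onI, clarify)
        fix b1 k1 b2 k2 assume b: "b1 \<in> B" "k1 < n" "b2 \<in> B" "k2 < n"
          and eq: "b1 + nmul k1 a = b2 + nmul k2 a"
        have "k1 = k2"
        proof (rule ccontr)
          assume "k1 \<noteq> k2"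
          then consider "k1 < k2" | "k2 < k1" by linarith
          then show False
          proof cases
            case 1
            have "nmul (k2 - k1) a = b1 - b2"
              using eq nmul_add[of "k2 - k1" k1 a] 1 by (simp add: algebra_simps)
            moreover have "k2 - k1 < n" using 1 b by linarith
            ultimately show False using nmin[of "k2 - k1"] 1 b B by (simp add: sg_diff)
          next
            case 2
            have "nmul (k1 - k2) a = b2 - b1"
              using eq nmul_add[of "k1 - k2" k2 a] 2 by (simp add: algebra_simps)
            moreover have "k1 - k2 < n" using 2 b by linarith
            ultimately show False using nmin[of "k1 - k2"] 2 b B by (simp add: sg_diff)
          qed
        qed
        then show "b1 = b2 \<and> k1 = k2" using eq by simp
      qed
      have "(\<lambda>(b, k). b + nmul k a) ` (B \<times> {..<n}) \<subseteq> B'" unfolding B'_def by auto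
      then have "card (B \<times> {..<n}) \<le> card B'" using inj by (metis card_inj_on_le finite)
      then show ?thesis by (simp add: card_cartesian_product mult.commute)
    qed
    let ?T = "{t::qz. nmul n t = 0}"
    have fT: "finite ?T" and cT: "card ?T \<le> n" using tors_card[OF n(1)] by auto
    have fib: "card {\<psi> \<in> FF B. \<psi> a = t} \<le> card (FF B' :: ('m\<Rightarrow>qz) set)" for t
    proof (cases "{\<psi> \<in> FF B. \<psi> a = t} = {}")
      case True then show ?thesis by (metis card.empty le0)
    next
      case False
      then obtain \<psi>0 where p0: "\<psi>0 \<in> FF B" "\<psi>0 a = t" by auto
      have inj: "inj_on (\<lambda>\<psi> x. \<psi> x - \<psi>0 x) {\<psi> \<in> FF B. \<psi> a = t}"
      proof (rule inj_onI)
        fix p1 p2 assume eq: "(\<lambda>x. p1 x - \<psi>0 x) = (\<lambda>x. p2 x - \<psi>0 x)"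
        show "p1 = p2"
        proof
          fix x
          have "p1 x - \<psi>0 x = p2 x - \<psi>0 x" using fun_cong[OF eq, of x] by simp
          then show "p1 x = p2 x" by simp
        qed
      qed
      have "(\<lambda>\<psi> x. \<psi> x - \<psi>0 x) ` {\<psi> \<in> FF B. \<psi> a = t} \<subseteq> FF B'"
      proof (rule image_subsetI)
        fix \<psi> assume "\<psi> \<in> {\<psi> \<in> FF B. \<psi> a = t}"
        then have p: "\<psi> \<in> FF B" "\<psi> a = t" by auto
        have a1: "addf \<psi>" "addf \<psi>0" using p(1) p0(1) by (auto simp: FF_def dc_addf)
        have "(\<lambda>x. \<psi> x - \<psi>0 x) \<in> dual_carrier" unfolding dual_carrier_def
          using a1 by (auto simp: addf_add)
        moreover have "\<forall>y\<in>B'. \<psi> y - \<psi>0 y = 0"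
          unfolding B'_def using p p0 a1 by (auto simp: FF_def addf_add addf_nmul)
        ultimately show "(\<lambda>x. \<psi> x - \<psi>0 x) \<in> FF B'" by (simp add: FF_def)
      qed
      moreover have "finite (FF B' :: ('m\<Rightarrow>qz) set)"
        using fin by (rule finite_subset[rotated]) (auto simp: FF_def)
      ultimately show ?thesis using inj by (intro card_inj_on_le) auto
    qed
    have cov: "FF B \<subseteq> (\<Union>t\<in>?T. {\<psi> \<in> FF B. \<psi> a = t})"
    proof
      fix \<psi> assume p: "\<psi> \<in> FF B"
      then have "addf \<psi>" by (simp add: FF_def dc_addf)
      then have "nmul n (\<psi> a) = 0" using p n(2) by (simp add: FF_def addf_nmul[symmetric])
      then show "\<psi> \<in> (\<Union>t\<in>?T. {\<psi> \<in> FF B. \<psi> a = t})" using p by auto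
    qed
    have "card (FF B :: ('m\<Rightarrow>qz) set) \<le> card (\<Union>t\<in>?T. {\<psi> \<in> FF B. \<psi> a = t})"
      by (rule card_mono[OF _ cov]) (use fT fin in \<open>auto simp: FF_def\<close>)
    also have "\<dots> \<le> (\<Sum>t\<in>?T. card {\<psi> \<in> FF B. \<psi> a = t})" by (rule card_UN_le[OF fT])
    also have "\<dots> \<le> card ?T * card (FF B' :: ('m\<Rightarrow>qz) set)"
      using sum_bounded_above[of ?T "\<lambda>t. card {\<psi> \<in> FF B. \<psi> a = t}"] fib by simp
    also have "\<dots> \<le> n * card (FF B' :: ('m\<Rightarrow>qz) set)" using cT by simp
    finally have c1: "card (FF B :: ('m\<Rightarrow>qz) set) \<le> n * card (FF B' :: ('m\<Rightarrow>qz) set)" .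
    have "card (FF B :: ('m\<Rightarrow>qz) set) * card B \<le> card (FF B' :: ('m\<Rightarrow>qz) set) * (n * card B)"
      using mult_le_mono1[OF c1, of "card B"] by (simp add: ac_simps)
    also have "\<dots> \<le> card (FF B' :: ('m\<Rightarrow>qz) set) * card B'" using nB by simp
    also have "\<dots> \<le> card (FF C :: ('m\<Rightarrow>qz) set) * card C" using IH .
    finally show ?thesis .
  qed
qed




locale dmod =
  fixes q :: nat and r s :: "'m::{ab_group_add,finite} \<Rightarrow> 'm"
  assumes oddq: "odd q" and q1: "1 < q" and dm: "is_D_module q r s"
begin

lemma r_addf: "addf r" using dm by (simp add: is_D_module_def addf_def)
lemma s_addf: "addf s" using dm by (simp add: is_D_module_def addf_def)
lemma rq: "(r ^^ q) x = x" using dm by (simp add: is_D_module_def)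
lemma ss[simp]: "s (s x) = x" using dm by (simp add: is_D_module_def)
lemma srs: "s (r (s x)) = (r ^^ (q - 1)) x" using dm by (simp add: is_D_module_def)

lemma rpow_addf: "addf (r ^^ n)"
  by (induction n) (simp_all add: addf_def r_addf[unfolded addf_def])

lemma rpow_qmult: "(r ^^ (k * q)) x = x"
  by (induction k arbitrary: x) (simp_all add: funpow_add rq)

lemma rpow_mod: "(r ^^ n) x = (r ^^ (n mod q)) x"
proof -
  have "n = n mod q + (n div q) * q" by simp
  then have "(r ^^ n) x = (r ^^ (n mod q)) ((r ^^ ((n div q) * q)) x)"
    by (metis comp_apply funpow_add)
  then show ?thesis by (simp add: rpow_qmult)
qed

lemma rpow_cong: "n mod q = m mod q \<Longrightarrow> (r ^^ n) x = (r ^^ m) x"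
  by (metis rpow_mod)

lemma s_r: "s (r y) = (r ^^ (q - 1)) (s y)"
  using srs[of "s y"] by simp

lemma r_s: "r (s y) = s ((r ^^ (q - 1)) y)"
  using srs[of y] by (metis ss)

lemma s_rpow: "s ((r ^^ i) x) = (r ^^ (i * (q - 1))) (s x)"
proof (induction i)
  case 0 then show ?case by simp
next
  case (Suc i)
  have "s ((r ^^ Suc i) x) = s (r ((r ^^ i) x))" by simp
  also have "\<dots> = (r ^^ (q - 1)) (s ((r ^^ i) x))" by (rule s_r)
  also have "\<dots> = (r ^^ (q - 1)) ((r ^^ (i * (q - 1))) (s x))" using Suc by simp
  also have "\<dots> = (r ^^ (Suc i * (q - 1))) (s x)" by (simp add: funpow_add)
  finally show ?case .
qed

lemma rpow_fix: "r x = x \<Longrightarrow> (r ^^ n) x = x"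
  by (induction n) simp_all

lemma rpow_inj: "inj (r ^^ n)"
proof (rule injI)
  fix x y assume "(r ^^ n) x = (r ^^ n) y"
  then have "(r ^^ (n * (q - 1))) ((r ^^ n) x) = (r ^^ (n * (q - 1))) ((r ^^ n) y)" by simp
  moreover have "(r ^^ (n * (q - 1))) ((r ^^ n) z) = z" for z
  proof -
    have "(r ^^ (n * (q - 1))) ((r ^^ n) z) = (r ^^ (n * q)) z"
      using q1 by (simp add: funpow_add[symmetric, THEN fun_cong, simplified] algebra_simps)
    then show ?thesis by (metis mult.commute rpow_qmult)
  qed
  ultimately show "x = y" by simp
qed

definition NR :: "'m \<Rightarrow> 'm" where "NR x = (\<Sum>i<q. (r ^^ i) x)"

lemma NR_addf: "addf NR"
  unfolding addf_def NR_def using rpow_addf by (simp add: addf_add sum.distrib)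

lemma r_NR: "r (NR x) = NR x"
proof -
  have "r (NR x) = (\<Sum>i<q. r ((r ^^ i) x))" unfolding NR_def by (rule addf_sum[OF r_addf])
  also have "\<dots> = (\<Sum>i<q. (r ^^ Suc i) x)" by simp
  also have "\<dots> = NR x"
  proof -
    have "(\<Sum>i<Suc q. (r ^^ i) x) = (r ^^ 0) x + (\<Sum>i<q. (r ^^ Suc i) x)"
      by (rule sum.lessThan_Suc_shift)
    moreover have "(\<Sum>i<Suc q. (r ^^ i) x) = NR x + (r ^^ q) x" by (simp add: NR_def)
    ultimately show ?thesis using rq[of x] by (simp add: add.commute)
  qed
  finally show ?thesis .
qed

lemma NR_r: "NR (r x) = NR x"
proof -
  have "NR (r x) = (\<Sum>i<q. r ((r ^^ i) x))" unfolding NR_def by (simp add: funpow_swap1)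
  also have "\<dots> = r (NR x)" unfolding NR_def by (rule addf_sum[OF r_addf, symmetric])
  finally show ?thesis by (simp add: r_NR)
qed

lemma NR_rpow: "NR ((r ^^ k) x) = NR x"
  by (induction k) (simp_all add: NR_r)

lemma mod_aux: "i < q \<Longrightarrow> (i * (q - 1)) mod q = (q - i) mod q"
proof (cases "i = 0")
  case True then show ?thesis by simp
next
  case False
  assume iq: "i < q"
  have "i * (q - 1) = (i - 1) * q + (q - i)" using False iq
    by (simp add: algebra_simps diff_mult_distrib diff_mult_distrib2)
  then show ?thesis by simp
qed

lemma s_NR: "s (NR x) = NR (s x)"
proof -
  have "s (NR x) = (\<Sum>i<q. s ((r ^^ i) x))" unfolding NR_def by (rule addf_sum[OF s_addf])
  also have "\<dots> = (\<Sum>i<q. (r ^^ ((q - i) mod q)) (s x))"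
  proof (rule sum.cong)
    fix i assume "i \<in> {..<q}"
    then have "(i * (q - 1)) mod q = ((q - i) mod q) mod q" using mod_aux[of i] by simp
    then show "s ((r ^^ i) x) = (r ^^ ((q - i) mod q)) (s x)"
      unfolding s_rpow by (rule rpow_cong)
  qed simp
  also have "\<dots> = (\<Sum>j<q. (r ^^ j) (s x))"
  proof (rule sum.reindex_bij_betw)
    show "bij_betw (\<lambda>i. (q - i) mod q) {..<q} {..<q}"
    proof -
      have inj: "inj_on (\<lambda>i. (q - i) mod q) {..<q}"
      proof (rule inj_onI)
        fix i j assume ij: "i \<in> {..<q}" "j \<in> {..<q}" "(q - i) mod q = (q - j) mod q"
        then show "i = j"
          by (cases "i = 0"; cases "j = 0") (simp_all add: mod_if split: if_splits)
      qed
      have sub: "(\<lambda>i. (q - i) mod q) ` {..<q} \<subseteq> {..<q}" using q1 by auto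
      show ?thesis unfolding bij_betw_def using inj sub
        by (simp add: endo_inj_surj)
    qed
  qed
  finally show ?thesis by (simp add: NR_def)
qed

end



context dmod begin

lemma Rgrp_img: "Rgrp q = (\<lambda>a. (a, 0)) ` {..<q}"
  by (auto simp: Rgrp_def)
lemma Dgrp_img: "Dgrp q = (\<lambda>a. (a, 0)) ` {..<q} \<union> (\<lambda>a. (a, 1)) ` {..<q}"
  by (auto simp: Dgrp_def less_2_cases_iff)

lemma FR: "fixedpts r s (Rgrp q) = {x. r x = x}"
proof -
  have "(1, 0) \<in> Rgrp q" using q1 by (simp add: Rgrp_def)
  then show ?thesis by (auto simp: fixedpts_def Rgrp_def dact_def rpow_fix)
qed

lemma FD: "fixedpts r s (Dgrp q) = {x. r x = x \<and> s x = x}"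
proof -
  have "(1, 0) \<in> Dgrp q" "(0, 1) \<in> Dgrp q" using q1 by (auto simp: Dgrp_def)
  then show ?thesis by (auto simp: fixedpts_def Dgrp_def dact_def rpow_fix less_2_cases_iff)
qed

lemma FS: "fixedpts r s Sgrp = {x. s x = x}"
  by (auto simp: fixedpts_def Sgrp_def dact_def)

lemma FT: "fixedpts r s Triv = UNIV"
  by (auto simp: fixedpts_def Triv_def dact_def)

lemma NmR: "normmap r s (Rgrp q) = NR"
proof
  fix x show "normmap r s (Rgrp q) x = NR x"
    unfolding normmap_def Rgrp_img NR_def by (subst sum.reindex) (auto simp: inj_on_def dact_def)
qed

lemma NmD: "normmap r s (Dgrp q) x = NR x + NR (s x)"
proof -
  have "normmap r s (Dgrp q) x = (\<Sum>g\<in>(\<lambda>a. (a, 0)) ` {..<q}. dact r s g x) + (\<Sum>g\<in>(\<lambda>a. (a, 1::nat)) ` {..<q}. dact r s g x)"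
    unfolding normmap_def Dgrp_img by (rule sum.union_disjoint) auto
  also have "\<dots> = NR x + NR (s x)"
    unfolding NR_def by (simp add: sum.reindex inj_on_def dact_def)
  finally show ?thesis .
qed

lemma NmS: "normmap r s Sgrp x = x + s x"
  by (simp add: normmap_def Sgrp_def dact_def)

lemma NmT: "normmap r s Triv x = x"
  by (simp add: normmap_def Triv_def dact_def)

lemma sg_range_diff: "addf f \<Longrightarrow> sg (range (\<lambda>x. f x - x))"
  by (rule sg_range) (simp add: addf_def algebra_simps)

lemma augT: "augment r s Triv = {0}"
proof -
  have "{dact r s g x - x | g x. g \<in> Triv} = {0}" by (auto simp: Triv_def dact_def)
  moreover have "gen_subgroup {0} = ({0} :: 'm set)"
    using gen_subgroup_le[of "{0}" "{0::'m}"] gen_subgroup_ge[of "{0::'m}"] by (auto simp: sg_def)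
  ultimately show ?thesis by (simp add: augment_def)
qed

lemma augS: "augment r s Sgrp = range (\<lambda>x. s x - x)"
proof -
  have a: "s x - x \<in> {dact r s g x - x | g x. g \<in> Sgrp}" for x
    by (intro CollectI exI[of _ "(0, 1)"] exI[of _ x]) (simp add: dact_def Sgrp_def)
  have b: "0 \<in> {dact r s g x - x | g x. g \<in> Sgrp}"
    by (intro CollectI exI[of _ "(0, 0)"] exI[of _ 0]) (simp add: dact_def Sgrp_def)
  have "{dact r s g x - x | g x. g \<in> Sgrp} = range (\<lambda>x. s x - x) \<union> {0}"
    apply (rule equalityI)
     apply (force simp: Sgrp_def dact_def)
    using a b by blast
  also have "\<dots> = range (\<lambda>x. s x - x)" by (auto intro: range_eqI[of _ _ 0] simp: addf_0[OF s_addf])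
  finally have e: "{dact r s g x - x | g x. g \<in> Sgrp} = range (\<lambda>x. s x - x)" .
  have sg: "sg (range (\<lambda>x. s x - x))" by (rule sg_range_diff[OF s_addf])
  show ?thesis unfolding augment_def e
    using gen_subgroup_le[OF subset_refl sg] gen_subgroup_ge by blast
qed

lemma rpow_tele: "(r ^^ a) x - x = r y - y" if "y = (\<Sum>i<a. (r ^^ i) x)" for a x y
proof -
  have "r y = (\<Sum>i<a. (r ^^ Suc i) x)" unfolding that using addf_sum[OF r_addf] by simp
  then have "r y - y = (\<Sum>i<a. (r ^^ Suc i) x - (r ^^ i) x)" unfolding that
    by (simp add: sum_subtractf)
  also have "\<dots> = (r ^^ a) x - x" by (subst sum_lessThan_telescope) simp
  finally show ?thesis by simp
qed

lemma augR: "augment r s (Rgrp q) = range (\<lambda>x. r x - x)"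
proof -
  have sg: "sg (range (\<lambda>x. r x - x))" by (rule sg_range_diff[OF r_addf])
  have sub: "{dact r s g x - x | g x. g \<in> Rgrp q} \<subseteq> range (\<lambda>x. r x - x)"
    using rpow_tele by (auto simp: Rgrp_def dact_def)
  have sup: "range (\<lambda>x. r x - x) \<subseteq> {dact r s g x - x | g x. g \<in> Rgrp q}"
  proof
    fix y assume "y \<in> range (\<lambda>x. r x - x)"
    then obtain x where "y = r x - x" by auto
    moreover have "(1, 0) \<in> Rgrp q" using q1 by (simp add: Rgrp_def)
    ultimately show "y \<in> {dact r s g x - x | g x. g \<in> Rgrp q}"
      by (intro CollectI exI[of _ "(1, 0)"] exI[of _ x]) (simp add: dact_def)
  qed
  show ?thesis unfolding augment_def
    using gen_subgroup_le[OF sub sg] gen_subgroup_ge[of "{dact r s g x - x | g x. g \<in> Rgrp q}"] sup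
    by blast
qed

definition PP :: "'m set" where "PP = range (\<lambda>x. s x - x)"
definition QQ :: "'m set" where "QQ = range (\<lambda>x. r (s x) - x)"
definition JJ :: "'m set" where "JJ = {p + p' | p p'. p \<in> PP \<and> p' \<in> QQ}"

lemma rs_addf: "addf (\<lambda>x. r (s x))"
  using r_addf s_addf by (simp add: addf_def)

lemma sgPP: "sg PP" unfolding PP_def by (rule sg_range_diff[OF s_addf])
lemma sgQQ: "sg QQ" unfolding QQ_def by (rule sg_range_diff[OF rs_addf])
lemma sgJJ: "sg JJ"
  unfolding sg_def JJ_def
proof (intro conjI ballI)
  show "0 \<in> {p + p' | p p'. p \<in> PP \<and> p' \<in> QQ}" using sg_0[OF sgPP] sg_0[OF sgQQ] by force
  fix x y assume "x \<in> {p + p' | p p'. p \<in> PP \<and> p' \<in> QQ}" "y \<in> {p + p' | p p'. p \<in> PP \<and> p' \<in> QQ}"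
  then obtain p1 p1' p2 p2' where "x = p1 + p1'" "y = p2 + p2'" "p1 \<in> PP" "p2 \<in> PP" "p1' \<in> QQ" "p2' \<in> QQ"
    by blast
  moreover then have "x - y = (p1 - p2) + (p1' - p2')" by (simp add: algebra_simps)
  ultimately show "x - y \<in> {p + p' | p p'. p \<in> PP \<and> p' \<in> QQ}"
    using sg_diff[OF sgPP] sg_diff[OF sgQQ] by blast
qed

lemma PP_JJ: "p \<in> PP \<Longrightarrow> p \<in> JJ"
  unfolding JJ_def using sg_0[OF sgQQ] by force
lemma QQ_JJ: "p \<in> QQ \<Longrightarrow> p \<in> JJ"
  unfolding JJ_def using sg_0[OF sgPP] by force

lemma augD: "augment r s (Dgrp q) = JJ"
proof -
  let ?G = "{dact r s g x - x | g x. g \<in> Dgrp q}"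
  have sx: "s x - x \<in> JJ" for x by (rule PP_JJ) (auto simp: PP_def)
  have rx: "r x - x \<in> JJ" for x
  proof -
    have e: "r x - x = (s x - x) + (r (s (s x)) - s x)" by simp
    have "s x - x \<in> PP" unfolding PP_def by blast
    moreover have "r (s (s x)) - s x \<in> QQ" unfolding QQ_def by blast
    ultimately have "(s x - x) + (r (s (s x)) - s x) \<in> JJ" unfolding JJ_def by blast
    then show ?thesis by (simp only: e)
  qed
  have rax: "(r ^^ a) x - x \<in> JJ" for a x
  proof (induction a)
    case 0 then show ?case using sg_0[OF sgJJ] by simp
  next
    case (Suc a)
    have e: "(r ^^ Suc a) x - x = (r ((r ^^ a) x) - (r ^^ a) x) + ((r ^^ a) x - x)" by simp
    have "(r ((r ^^ a) x) - (r ^^ a) x) + ((r ^^ a) x - x) \<in> JJ"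
      by (rule sg_add[OF sgJJ rx Suc.IH])
    then show ?case by (simp only: e)
  qed
  have sub: "?G \<subseteq> JJ"
  proof
    fix y assume "y \<in> ?G"
    then obtain g x where gx: "y = dact r s g x - x" "g \<in> Dgrp q" by blast
    then obtain a b where g: "g = (a, b)" "b = 0 \<or> b = 1" by (auto simp: Dgrp_def less_2_cases_iff)
    show "y \<in> JJ"
    proof (cases "b = 0")
      case True then show ?thesis using g gx rax by (simp add: dact_def)
    next
      case False
      then have e: "y = ((r ^^ a) (s x) - s x) + (s x - x)" using g gx by (simp add: dact_def)
      have "((r ^^ a) (s x) - s x) + (s x - x) \<in> JJ" by (rule sg_add[OF sgJJ rax sx])
      then show ?thesis by (simp only: e)
    qed
  qed
  have sup: "JJ \<subseteq> gen_subgroup ?G"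
  proof
    fix y assume "y \<in> JJ"
    then obtain p p' where y: "y = p + p'" "p \<in> PP" "p' \<in> QQ" unfolding JJ_def by blast
    obtain x x' where xx: "p = s x - x" "p' = r (s x') - x'" using y unfolding PP_def QQ_def by blast
    have "p \<in> ?G" unfolding xx
      by (intro CollectI exI[of _ "(0, 1)"] exI[of _ x]) (use q1 in \<open>simp add: dact_def Dgrp_def\<close>)
    moreover have "p' \<in> ?G" unfolding xx
      by (intro CollectI exI[of _ "(1, 1)"] exI[of _ x']) (use q1 in \<open>simp add: dact_def Dgrp_def\<close>)
    ultimately have "p + p' \<in> gen_subgroup ?G"
      using gen_subgroup_ge[of ?G] sg_add[OF gen_subgroup_sg] by blast
    then show "y \<in> gen_subgroup ?G" using y(1) by simp
  qed
  show ?thesis unfolding augment_def using gen_subgroup_le[OF sub sgJJ] sup by blast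
qed

end



lemma sum_const_nmul: "(\<Sum>i<n. y) = nmul n y"
  by (induction n) (simp_all add: add.commute)

context dmod begin

lemma NR_fix: "r y = y \<Longrightarrow> NR y = nmul q y"
  unfolding NR_def by (simp add: rpow_fix sum_const_nmul)

lemma r_s_fix: "r x = x \<Longrightarrow> r (s x) = s x"
  by (simp add: r_s rpow_fix)

lemma rsrs: "r (s (r (s b))) = b"
proof -
  have "r (s (r (s b))) = r ((r ^^ (q - 1)) b)" by (simp add: srs)
  also have "\<dots> = (r ^^ Suc (q - 1)) b" by simp
  also have "\<dots> = b" using q1 rq by simp
  finally show ?thesis .
qed

lemma img_PQ: "(\<lambda>x. s x - x) ` {x. r x = x} = PP \<inter> QQ"
proof
  show "(\<lambda>x. s x - x) ` {x. r x = x} \<subseteq> PP \<inter> QQ"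
  proof clarify
    fix x assume rx: "r x = x"
    have "s x - x \<in> PP" unfolding PP_def by blast
    moreover have "s x - x = r (s x) - x" using r_s_fix[OF rx] by simp
    then have "s x - x \<in> QQ" unfolding QQ_def using rangeI[of "\<lambda>x. r (s x) - x" x] by simp
    ultimately show "s x - x \<in> PP \<inter> QQ" by blast
  qed
  show "PP \<inter> QQ \<subseteq> (\<lambda>x. s x - x) ` {x. r x = x}"
  proof
    fix y assume "y \<in> PP \<inter> QQ"
    then obtain a b where ya: "y = s a - a" and yb: "y = r (s b) - b" unfolding PP_def QQ_def by blast
    have sy: "s y = - y" using ya addf_diff[OF s_addf] by simp
    have "r (s y) = b - r (s b)" using yb addf_diff[OF s_addf] addf_diff[OF r_addf] rsrs by simp
    then have "r (s y) = - y" using yb by simp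
    then have ry: "r y = y" using sy addf_uminus[OF r_addf, of y] by simp
    obtain j where qj: "q = Suc (2 * j)" 
    proof -
      from oddq obtain j where "q = 2 * j + 1" by (rule oddE)
      then show ?thesis using that by simp
    qed
    define c where "c = NR a + nmul j y"
    have rc: "r c = c" unfolding c_def
      by (simp add: addf_add[OF r_addf] r_NR addf_nmul[OF r_addf] ry)
    have "s c - c = (NR (s a) - NR a) + nmul j (s y - y)" unfolding c_def
      by (simp add: addf_add[OF s_addf] s_NR addf_nmul[OF s_addf] addf_diff[OF nmul_addf] algebra_simps)
    also have "NR (s a) - NR a = NR y" using ya addf_diff[OF NR_addf] by simp
    also have "\<dots> = nmul q y" by (rule NR_fix[OF ry])
    also have "nmul j (s y - y) = - nmul (2 * j) y"
    proof -
      have "nmul j (s y - y) = - (nmul j y + nmul j y)" using sy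
        by (simp add: addf_uminus[OF nmul_addf] addf_add[OF nmul_addf] flip: diff_conv_add_uminus)
          (simp add: addf_diff[OF nmul_addf] addf_uminus[OF nmul_addf])
      then show ?thesis by (simp add: mult_2 nmul_add)
    qed
    also have "nmul q y + - nmul (2 * j) y = y" unfolding qj by simp
    finally have "y = s c - c" by simp
    then show "y \<in> (\<lambda>x. s x - x) ` {x. r x = x}" using rc by blast
  qed
qed

lemma card_conj: "card {x. s x = x} = card {x. r (s x) = x}"
proof -
  obtain j where qj: "q = Suc (2 * j)" 
    proof -
      from oddq obtain j where "q = 2 * j + 1" by (rule oddE)
      then show ?thesis using that by simp
    qed
  define k where "k = Suc j"
  have e1: "k * (q - 1) + 1 = j * q + k" unfolding k_def qj by (simp add: algebra_simps)
  have e2: "j * (q - 1) + (q - 1) = j * q + j" unfolding qj by (simp add: algebra_simps)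
  have e3: "k + j = q" unfolding k_def qj by simp
  have A: "(r ^^ k) ` {x. s x = x} \<subseteq> {x. r (s x) = x}"
  proof clarify
    fix x assume sx: "s x = x"
    have "r (s ((r ^^ k) x)) = (r ^^ Suc (k * (q - 1))) x" by (simp add: s_rpow sx)
    also have "\<dots> = (r ^^ (j * q + k)) x" using e1 by simp
    also have "\<dots> = (r ^^ k) x" by (simp add: funpow_add rpow_qmult)
    finally show "r (s ((r ^^ k) x)) = (r ^^ k) x" .
  qed
  have B: "(r ^^ j) ` {x. r (s x) = x} \<subseteq> {x. s x = x}"
  proof clarify
    fix y assume ry: "r (s y) = y"
    have "(r ^^ Suc (q - 1)) (s y) = (r ^^ (q - 1)) (r (s y))" by (simp only: funpow_Suc_right o_apply)
    then have "(r ^^ (q - 1)) y = (r ^^ Suc (q - 1)) (s y)" using ry by simp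
    then have sy: "s y = (r ^^ (q - 1)) y" using q1 rq by simp
    have "s ((r ^^ j) y) = (r ^^ (j * (q - 1))) ((r ^^ (q - 1)) y)" by (simp add: s_rpow sy)
    also have "\<dots> = (r ^^ (j * (q - 1) + (q - 1))) y" by (simp add: funpow_add)
    also have "\<dots> = (r ^^ (j * q + j)) y" using e2 by simp
    also have "\<dots> = (r ^^ j) y" by (simp add: funpow_add rpow_qmult)
    finally show "s ((r ^^ j) y) = (r ^^ j) y" .
  qed
  have "card {x. s x = x} \<le> card {x. r (s x) = x}"
    by (rule card_inj_on_le[OF inj_on_subset[OF rpow_inj] A]) auto
  moreover have "card {x. r (s x) = x} \<le> card {x. s x = x}"
    by (rule card_inj_on_le[OF inj_on_subset[OF rpow_inj] B]) auto
  ultimately show ?thesis by simp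
qed

end



lemma kerimU:
  fixes f :: "'m::{ab_group_add,finite} \<Rightarrow> 'm"
  assumes "addf f"
  shows "card (UNIV :: 'm set) = card (range f) * card {x. f x = 0}"
  using kerim[of "UNIV :: 'm set" f] assms sg_UNIV by simp

lemma card_pos_sg: "finite A \<Longrightarrow> sg A \<Longrightarrow> card A > 0"
  using sg_0 card_gt_0_iff by blast

lemma herbrand:
  fixes N f :: "'m::{ab_group_add,finite} \<Rightarrow> 'm"
  assumes N: "addf N" and f: "addf f" and s1: "range N \<subseteq> {x. f x = 0}" and s2: "range f \<subseteq> {x. N x = 0}"
  shows "quot_card {x. f x = 0} (range N) = quot_card {x. N x = 0} (range f)"
proof -
  have sF: "sg {x. f x = 0}" using sg_ker[OF f sg_UNIV] by simp
  have sK: "sg {x. N x = 0}" using sg_ker[OF N sg_UNIV] by simp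
  have a: "quot_card {x. f x = 0} (range N) * card (range N) = card {x. f x = 0}"
    by (rule quot_card_mult[OF _ sF sg_range[OF N] s1]) simp
  have b: "quot_card {x. N x = 0} (range f) * card (range f) = card {x. N x = 0}"
    by (rule quot_card_mult[OF _ sK sg_range[OF f] s2]) simp
  have c: "card (UNIV :: 'm set) = card (range N) * card {x. N x = 0}" by (rule kerimU[OF N])
  have d: "card (UNIV :: 'm set) = card (range f) * card {x. f x = 0}" by (rule kerimU[OF f])
  have pN: "card (range N) > 0" and pf: "card (range f) > 0"
    using card_pos_sg[OF _ sg_range[OF N]] card_pos_sg[OF _ sg_range[OF f]] by auto
  have "quot_card {x. f x = 0} (range N) * (card (range N) * card (range f))
      = quot_card {x. N x = 0} (range f) * (card (range N) * card (range f))"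
  proof -
    have "quot_card {x. f x = 0} (range N) * (card (range N) * card (range f))
        = (quot_card {x. f x = 0} (range N) * card (range N)) * card (range f)" by (simp only: mult.assoc)
    also have "\<dots> = card (UNIV :: 'm set)" using a d by simp
    also have "\<dots> = (quot_card {x. N x = 0} (range f) * card (range f)) * card (range N)" using b c by simp
    also have "\<dots> = quot_card {x. N x = 0} (range f) * (card (range N) * card (range f))" by (simp only: ac_simps)
    finally show ?thesis .
  qed
  then show ?thesis using pN pf by simp
qed

context dmod begin

lemma tateR: "tate0 r s (Rgrp q) = tate_m1 r s (Rgrp q)"
proof -
  have "tate0 r s (Rgrp q) = quot_card {x. r x - x = 0} (range NR)"
    by (simp add: tate0_def FR NmR)
  also have "\<dots> = quot_card {x. NR x = 0} (range (\<lambda>x. r x - x))"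
  proof (rule herbrand[OF NR_addf])
    show "addf (\<lambda>x. r x - x)" using r_addf by (simp add: addf_def algebra_simps)
    show "range NR \<subseteq> {x. r x - x = 0}" by (auto simp: r_NR)
    show "range (\<lambda>x. r x - x) \<subseteq> {x. NR x = 0}" by (auto simp: addf_diff[OF NR_addf] NR_r)
  qed
  also have "\<dots> = tate_m1 r s (Rgrp q)" by (simp add: tate_m1_def NmR augR)
  finally show ?thesis .
qed

lemma tateS: "tate0 r s Sgrp = tate_m1 r s Sgrp"
proof -
  have NS: "normmap r s Sgrp = (\<lambda>x. x + s x)" using NmS by auto
  have aN: "addf (\<lambda>x. x + s x)" using s_addf by (simp add: addf_def algebra_simps)
  have "tate0 r s Sgrp = quot_card {x. s x - x = 0} (range (\<lambda>x. x + s x))"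
    by (simp add: tate0_def FS NS)
  also have "\<dots> = quot_card {x. x + s x = 0} (range (\<lambda>x. s x - x))"
  proof (rule herbrand[OF aN])
    show "addf (\<lambda>x. s x - x)" using s_addf by (simp add: addf_def algebra_simps)
    show "range (\<lambda>x. x + s x) \<subseteq> {x. s x - x = 0}" by (auto simp: addf_add[OF s_addf])
    show "range (\<lambda>x. s x - x) \<subseteq> {x. x + s x = 0}" by (auto simp: addf_diff[OF s_addf])
  qed
  also have "\<dots> = tate_m1 r s Sgrp" by (simp add: tate_m1_def NS augS)
  finally show ?thesis .
qed

lemma tateT: "tate0 r s Triv = 1" "tate_m1 r s Triv = 1"
proof -
  have NT: "normmap r s Triv = id" using NmT by auto
  have "quot_card (UNIV :: 'm set) UNIV * card (UNIV :: 'm set) = card (UNIV :: 'm set)"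
    by (rule quot_card_mult) (simp_all add: sg_UNIV)
  then show "tate0 r s Triv = 1" by (simp add: tate0_def FT NT)
  show "tate_m1 r s Triv = 1" by (simp add: tate_m1_def NT augT quot_card_def)
qed

definition ND :: "'m \<Rightarrow> 'm" where "ND x = NR x + NR (s x)"

lemma ND_addf: "addf ND"
  unfolding ND_def addf_def by (simp add: addf_add[OF NR_addf] addf_add[OF s_addf])

lemma FDset: "fixedpts r s (Dgrp q) = {x. r x = x \<and> s x = x}" by (rule FD)

lemma range_ND: "range ND \<subseteq> {x. r x = x \<and> s x = x}"
  by (auto simp: ND_def addf_add[OF r_addf] addf_add[OF s_addf] r_NR s_NR)

lemma JJ_ND: "JJ \<subseteq> {x. ND x = 0}"
proof -
  have P: "PP \<subseteq> {x. ND x = 0}" unfolding PP_def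
    by (auto simp: addf_diff[OF ND_addf]) (simp add: ND_def)
  have Q: "QQ \<subseteq> {x. ND x = 0}" unfolding QQ_def
  proof (auto simp: addf_diff[OF ND_addf])
    fix x
    have "ND (r (s x)) = NR (r (s x)) + NR (s (r (s x)))" by (simp add: ND_def)
    also have "\<dots> = NR (s x) + NR x" by (simp add: NR_r srs NR_rpow)
    finally show "ND (r (s x)) = ND x" by (simp add: ND_def add.commute)
  qed
  show ?thesis unfolding JJ_def using P Q addf_add[OF ND_addf] by fastforce
qed

lemma sgFD: "sg {x. r x = x \<and> s x = x}"
  unfolding sg_def using addf_0[OF r_addf] addf_0[OF s_addf]
  by (auto simp: addf_diff[OF r_addf] addf_diff[OF s_addf])

lemma sgFR: "sg {x. r x = x}"
  unfolding sg_def using addf_0[OF r_addf] by (auto simp: addf_diff[OF r_addf])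

lemma h_pos: "0 < tate0 r s (Dgrp q)" "0 < tate_m1 r s (Dgrp q)"
  "tate0 r s (Dgrp q) * card (range ND) = card {x. r x = x \<and> s x = x}"
  "tate_m1 r s (Dgrp q) * card JJ = card {x. ND x = 0}"
proof -
  have NmD': "normmap r s (Dgrp q) = ND" using NmD by (auto simp: ND_def)
  have sK: "sg {x. ND x = 0}" using sg_ker[OF ND_addf sg_UNIV] by simp
  show a: "tate0 r s (Dgrp q) * card (range ND) = card {x. r x = x \<and> s x = x}"
    unfolding tate0_def NmD' FD by (rule quot_card_mult[OF _ sgFD sg_range[OF ND_addf] range_ND]) simp
  show b: "tate_m1 r s (Dgrp q) * card JJ = card {x. ND x = 0}"
    unfolding tate_m1_def NmD' augD by (rule quot_card_mult[OF _ sK sgJJ JJ_ND]) simp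
  show "0 < tate0 r s (Dgrp q)" using a card_pos_sg[OF _ sgFD] by (metis finite gr0I mult_0)
  show "0 < tate_m1 r s (Dgrp q)" using b card_pos_sg[OF _ sK] by (metis finite gr0I mult_0)
qed

lemma main_nat:
  "tate_m1 r s (Dgrp q) * (card (UNIV :: 'm set) * card {x. r x = x \<and> s x = x} ^ 2)
   = tate0 r s (Dgrp q) * (card {x. r x = x} * card {x. s x = x} ^ 2)"
proof -
  define m where "m = card (UNIV :: 'm set)"
  define d where "d = card {x. r x = x \<and> s x = x}"
  define rr where "rr = card {x. r x = x}"
  define S where "S = card {x. s x = x}"
  define nD where "nD = card (range ND)"
  define kD where "kD = card {x. ND x = 0}"
  define J where "J = card JJ"
  define P where "P = card PP"
  define Q where "Q = card QQ"
  define Z where "Z = card (PP \<inter> QQ)"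
  define h0 where "h0 = tate0 r s (Dgrp q)"
  define h1 where "h1 = tate_m1 r s (Dgrp q)"
  have e1: "h0 * nD = d" using h_pos unfolding h0_def nD_def d_def by simp
  have e2: "h1 * J = kD" using h_pos unfolding h1_def J_def kD_def by simp
  have e3: "m = nD * kD" unfolding m_def nD_def kD_def by (rule kerimU[OF ND_addf])
  have e4: "J * Z = P * Q" unfolding J_def Z_def P_def Q_def JJ_def
    by (rule sumset_card[OF _ _ sgPP sgQQ]) simp_all
  have aS: "addf (\<lambda>x. s x - x)" using s_addf by (simp add: addf_def algebra_simps)
  have aT: "addf (\<lambda>x. r (s x) - x)" using rs_addf by (simp add: addf_def algebra_simps)
  have e5: "m = P * S" unfolding m_def P_def S_def PP_def using kerimU[OF aS] by simp
  have e6: "m = Q * S" unfolding m_def Q_def S_def QQ_def using kerimU[OF aT] card_conj by simp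
  have e7: "rr = Z * d"
  proof -
    have "card {x. r x = x} = card ((\<lambda>x. s x - x) ` {x. r x = x}) * card {x\<in>{x. r x = x}. s x - x = 0}"
      by (rule kerim[OF _ sgFR aS]) simp
    moreover have "{x\<in>{x. r x = x}. s x - x = 0} = {x. r x = x \<and> s x = x}" by auto
    ultimately show ?thesis unfolding rr_def Z_def d_def img_PQ by simp
  qed
  have pos: "nD * J > 0" unfolding nD_def J_def
    using card_pos_sg[OF _ sg_range[OF ND_addf]] card_pos_sg[OF _ sgJJ] by simp
  have "h1 * (m * d ^ 2) * (nD * J) = m * d ^ 2 * ((h1 * J) * nD)" by (simp add: ac_simps)
  also have "\<dots> = m * d ^ 2 * m" using e2 e3 by (simp add: ac_simps)
  also have "\<dots> = d ^ 2 * (P * S) * (Q * S)" using e5 e6 by (metis mult.commute)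
  also have "\<dots> = d * (Z * d) * S ^ 2 * (J)" using e4 by (simp add: power2_eq_square ac_simps)
  also have "\<dots> = (h0 * nD) * rr * S ^ 2 * J" using e1 e7 by simp
  also have "\<dots> = h0 * (rr * S ^ 2) * (nD * J)" by (simp add: ac_simps)
  finally have "h1 * (m * d ^ 2) = h0 * (rr * S ^ 2)" using pos by simp
  then show ?thesis unfolding h0_def h1_def m_def d_def rr_def S_def .
qed

end



context dmod begin

lemma dinv_D: "g \<in> Dgrp q \<Longrightarrow> dinv q g \<in> Dgrp q"
  using q1 by (auto simp: Dgrp_def dinv_def)

lemma dinv_dinv: "g \<in> Dgrp q \<Longrightarrow> dinv q (dinv q g) = g"
proof -
  assume g: "g \<in> Dgrp q"
  obtain a b where ab: "g = (a, b)" "a < q" "b < 2" using g by (auto simp: Dgrp_def)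
  show ?thesis
  proof (cases "b = 0")
    case True
    then show ?thesis using ab q1 by (cases "a = 0") (auto simp: dinv_def)
  next
    case False then show ?thesis using ab by (simp add: dinv_def)
  qed
qed

lemma inv_char:
  assumes psi: "\<psi> \<in> dual_carrier"
  shows "(\<forall>g\<in>Dgrp q. dual_act q r s g \<psi> = \<psi>) \<longleftrightarrow> \<psi> \<in> FF JJ"
proof
  have ap: "addf \<psi>" by (rule dc_addf[OF psi])
  let ?G = "{dact r s g x - x | g x. g \<in> Dgrp q}"
  assume inv: "\<forall>g\<in>Dgrp q. dual_act q r s g \<psi> = \<psi>"
  have h: "\<psi> (dact r s h m) = \<psi> m" if h: "h \<in> Dgrp q" for h m
  proof -
    have "dual_act q r s (dinv q h) \<psi> = \<psi>" using inv dinv_D[OF h] by blast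
    then have "\<psi> (dact r s (dinv q (dinv q h)) m) = \<psi> m" unfolding dual_act_def by (drule_tac x=m in fun_cong) simp
    then show ?thesis using dinv_dinv[OF h] by simp
  qed
  have "?G \<subseteq> {x\<in>UNIV. \<psi> x = 0}" using h by (auto simp: addf_diff[OF ap])
  then have "gen_subgroup ?G \<subseteq> {x\<in>UNIV. \<psi> x = 0}"
    by (rule gen_subgroup_le[OF _ sg_ker[OF ap sg_UNIV]])
  then show "\<psi> \<in> FF JJ" using psi unfolding FF_def augD[symmetric] augment_def by auto
next
  have ap: "addf \<psi>" by (rule dc_addf[OF psi])
  assume "\<psi> \<in> FF JJ"
  then have z: "\<forall>b\<in>augment r s (Dgrp q). \<psi> b = 0" unfolding FF_def augD by auto
  show "\<forall>g\<in>Dgrp q. dual_act q r s g \<psi> = \<psi>"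
  proof (intro ballI ext)
    fix g m assume g: "g \<in> Dgrp q"
    have "dact r s (dinv q g) m - m \<in> augment r s (Dgrp q)" unfolding augment_def
      using dinv_D[OF g] by (intro gen_subgroup.gen) blast
    then have "\<psi> (dact r s (dinv q g) m - m) = 0" using z by blast
    then show "dual_act q r s g \<psi> m = \<psi> m" unfolding dual_act_def by (simp add: addf_diff[OF ap])
  qed
qed

lemma iso_count:
  assumes iso: "iso_to_dual q r s"
  shows "card {x. r x = x \<and> s x = x} * card JJ = card (UNIV :: 'm set)"
proof -
  obtain f :: "'m \<Rightarrow> ('m \<Rightarrow> qz)" where bij: "bij_betw f UNIV dual_carrier"
    and eqv: "\<forall>g\<in>Dgrp q. \<forall>x. f (dact r s g x) = dual_act q r s g (f x)"
    using iso unfolding iso_to_dual_def by blast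
  have fin: "finite (dual_carrier :: ('m \<Rightarrow> qz) set)" using bij_betw_finite[OF bij] by simp
  have cDC: "card (dual_carrier :: ('m \<Rightarrow> qz) set) = card (UNIV :: 'm set)"
    using bij_betw_same_card[OF bij] by simp
  have inj: "inj f" using bij by (simp add: bij_betw_def)
  have fDC: "f x \<in> dual_carrier" for x using bij_betwE[OF bij] by simp
  have img: "f ` fixedpts r s (Dgrp q) = FF JJ"
  proof
    show "f ` fixedpts r s (Dgrp q) \<subseteq> FF JJ"
    proof clarify
      fix x assume x: "x \<in> fixedpts r s (Dgrp q)"
      have "\<forall>g\<in>Dgrp q. dual_act q r s g (f x) = f x"
      proof
        fix g assume g: "g \<in> Dgrp q"
        then have "dact r s g x = x" using x by (simp add: fixedpts_def)
        moreover have "f (dact r s g x) = dual_act q r s g (f x)" using eqv g by blast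
        ultimately show "dual_act q r s g (f x) = f x" by simp
      qed
      then show "f x \<in> FF JJ" using inv_char[OF fDC] by blast
    qed
    show "FF JJ \<subseteq> f ` fixedpts r s (Dgrp q)"
    proof
      fix \<psi> assume p: "\<psi> \<in> FF JJ"
      then have pDC: "\<psi> \<in> dual_carrier" by (simp add: FF_def)
      then have "\<psi> \<in> f ` UNIV" using bij_betw_imp_surj_on[OF bij] by simp
      then obtain x where x: "\<psi> = f x" by blast
      have "\<forall>g\<in>Dgrp q. dual_act q r s g \<psi> = \<psi>" using inv_char[OF pDC] p by blast
      then have "\<forall>g\<in>Dgrp q. f (dact r s g x) = f x" using eqv x by simp
      then have "x \<in> fixedpts r s (Dgrp q)" using injD[OF inj] unfolding fixedpts_def by simp
      then show "\<psi> \<in> f ` fixedpts r s (Dgrp q)" using x by blast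
    qed
  qed
  have cFD: "card {x. r x = x \<and> s x = x} = card (FF JJ :: ('m \<Rightarrow> qz) set)"
  proof -
    have "inj_on f (fixedpts r s (Dgrp q))" using inj by (rule inj_on_subset) simp
    then have "card (f ` fixedpts r s (Dgrp q)) = card (fixedpts r s (Dgrp q))" by (rule card_image)
    then show ?thesis using img FD by simp
  qed
  have F0: "FF {0::'m} = dual_carrier" unfolding FF_def using addf_0[OF dc_addf] by blast
  have FU: "FF (UNIV :: 'm set) = {\<lambda>_. 0}"
  proof
    show "FF UNIV \<subseteq> {\<lambda>_. 0}" unfolding FF_def by auto
    show "{\<lambda>_. 0} \<subseteq> FF (UNIV :: 'm set)" unfolding FF_def dual_carrier_def by simp
  qed
  have sg0: "sg {0::'m}" by (simp add: sg_def)
  have JU: "JJ \<subseteq> UNIV" by simp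
  have "card (FF {0::'m} :: ('m \<Rightarrow> qz) set) * card {0::'m} \<le> card (FF JJ :: ('m \<Rightarrow> qz) set) * card JJ"
    by (rule count_le[OF fin sg0 sgJJ]) (simp add: sg_0[OF sgJJ])
  then have l1: "card (UNIV :: 'm set) \<le> card (FF JJ :: ('m \<Rightarrow> qz) set) * card JJ" using F0 cDC by simp
  have "card (FF JJ :: ('m \<Rightarrow> qz) set) * card JJ \<le> card (FF (UNIV :: 'm set) :: ('m \<Rightarrow> qz) set) * card (UNIV :: 'm set)"
    by (rule count_le[OF fin sgJJ sg_UNIV JU])
  then have l2: "card (FF JJ :: ('m \<Rightarrow> qz) set) * card JJ \<le> card (UNIV :: 'm set)" using FU by simp
  show ?thesis using l1 l2 cFD by simp
qed

lemma iso_h: "iso_to_dual q r s \<Longrightarrow> tate0 r s (Dgrp q) = tate_m1 r s (Dgrp q)"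
proof -
  assume iso: "iso_to_dual q r s"
  have e: "card {x. r x = x \<and> s x = x} * card JJ = card (range ND) * card {x. ND x = 0}"
    using iso_count[OF iso] kerimU[OF ND_addf] by simp
  have pos: "card (range ND) * card JJ > 0"
    using card_pos_sg[OF _ sg_range[OF ND_addf]] card_pos_sg[OF _ sgJJ] by simp
  have "tate0 r s (Dgrp q) * (card (range ND) * card JJ) = tate_m1 r s (Dgrp q) * (card (range ND) * card JJ)"
  proof -
    have "tate0 r s (Dgrp q) * (card (range ND) * card JJ) = (tate0 r s (Dgrp q) * card (range ND)) * card JJ"
      by (simp only: mult.assoc)
    also have "\<dots> = card (range ND) * card {x. ND x = 0}" using h_pos(3) e by simp
    also have "\<dots> = card (range ND) * (tate_m1 r s (Dgrp q) * card JJ)" using h_pos(4) by simp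
    also have "\<dots> = tate_m1 r s (Dgrp q) * (card (range ND) * card JJ)" by (simp only: ac_simps)
    finally show ?thesis .
  qed
  then show ?thesis using pos by (metis mult_right_cancel not_gr0)
qed

end



theorem mainTheorem7:
  fixes q :: nat and r s :: "'m::{ab_group_add, finite} \<Rightarrow> 'm"
  assumes "odd q" and "q > 1"
    and "is_D_module q r s"
  shows "real (card (UNIV :: 'm set)) * real (card (fixedpts r s (Dgrp q))) ^ 2 /
           (real (card (fixedpts r s (Rgrp q))) * real (card (fixedpts r s Sgrp)) ^ 2)
         = real (tate0 r s (Dgrp q)) / real (tate_m1 r s (Dgrp q))
     \<and> reg_const_finite q r s = (real (tate_m1 r s (Dgrp q)) / real (tate0 r s (Dgrp q))) ^ 2
     \<and> reg_const_finite q r s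
         = theta_prod q (\<lambda>H. real (tate_m1 r s H)) / theta_prod q (\<lambda>H. real (tate0 r s H))
     \<and> (iso_to_dual q r s \<longrightarrow>
         real (card (UNIV :: 'm set)) * real (card (fixedpts r s (Dgrp q))) ^ 2 /
           (real (card (fixedpts r s (Rgrp q))) * real (card (fixedpts r s Sgrp)) ^ 2) = 1
         \<and> reg_const_finite q r s = 1)"
proof -
  interpret dmod q r s using assms by unfold_locales
  define m where "m = real (card (UNIV :: 'm set))"
  define d where "d = real (card (fixedpts r s (Dgrp q)))"
  define rr where "rr = real (card (fixedpts r s (Rgrp q)))"
  define S where "S = real (card (fixedpts r s Sgrp))"
  define h0 where "h0 = real (tate0 r s (Dgrp q))"
  define h1 where "h1 = real (tate_m1 r s (Dgrp q))"
  have pos: "m > 0" "d > 0" "rr > 0" "S > 0" "h0 > 0" "h1 > 0"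
  proof -
    have sS: "sg {x. s x = x}" unfolding sg_def using addf_0[OF s_addf] by (auto simp: addf_diff[OF s_addf])
    show "m > 0" unfolding m_def using card_pos_sg[of "UNIV :: 'm set"] sg_UNIV by simp
    show "d > 0" unfolding d_def FD using card_pos_sg[OF _ sgFD] by simp
    show "rr > 0" unfolding rr_def FR using card_pos_sg[OF _ sgFR] by simp
    show "S > 0" unfolding S_def FS using card_pos_sg[OF _ sS] by simp
    show "h0 > 0" "h1 > 0" unfolding h0_def h1_def using h_pos by simp_all
  qed
  have key: "h1 * (m * d ^ 2) = h0 * (rr * S ^ 2)"
    using main_nat unfolding h0_def h1_def m_def d_def rr_def S_def FD FR FS
    by (metis (mono_tags, lifting) of_nat_eq_iff of_nat_mult of_nat_power)
  have P1: "m * d ^ 2 / (rr * S ^ 2) = h0 / h1"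
    using key pos by (simp add: field_simps)
  have regv: "reg_const_finite q r s = (1 / m ^ 2 * (1 / d ^ 2) ^ 2) / ((1 / rr ^ 2) * (1 / S ^ 2) ^ 2)"
    unfolding reg_const_finite_def theta_prod_def m_def d_def rr_def S_def FT by simp
  have P2: "reg_const_finite q r s = (h1 / h0) ^ 2"
  proof -
    have "reg_const_finite q r s = (rr * S ^ 2 / (m * d ^ 2)) ^ 2"
      unfolding regv using pos by (simp add: field_simps power2_eq_square)
    also have "rr * S ^ 2 / (m * d ^ 2) = h1 / h0" using key pos by (simp add: field_simps)
    finally show ?thesis .
  qed
  have P3: "theta_prod q (\<lambda>H. real (tate_m1 r s H)) / theta_prod q (\<lambda>H. real (tate0 r s H)) = (h1 / h0) ^ 2"
  proof -
    have a: "real (tate0 r s (Rgrp q)) > 0"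
    proof -
      have "tate0 r s (Rgrp q) * card (range NR) = card {x. r x = x}"
        unfolding tate0_def NmR FR
        by (rule quot_card_mult[OF _ sgFR sg_range[OF NR_addf]]) (auto simp: r_NR)
      then show ?thesis using card_pos_sg[OF _ sgFR] by (metis finite gr0I mult_0 of_nat_0_less_iff)
    qed
    have b: "real (tate0 r s Sgrp) > 0"
    proof -
      have sS: "sg {x. s x = x}" unfolding sg_def using addf_0[OF s_addf] by (auto simp: addf_diff[OF s_addf])
      have NS: "normmap r s Sgrp = (\<lambda>x. x + s x)" using NmS by auto
      have aN: "addf (\<lambda>x. x + s x)" using s_addf by (simp add: addf_def algebra_simps)
      have "tate0 r s Sgrp * card (range (\<lambda>x. x + s x)) = card {x. s x = x}"
        unfolding tate0_def NS FS
        by (rule quot_card_mult[OF _ sS sg_range[OF aN]]) (auto simp: addf_add[OF s_addf])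
      then show ?thesis using card_pos_sg[OF _ sS] by (metis finite gr0I mult_0 of_nat_0_less_iff)
    qed
    show ?thesis unfolding theta_prod_def tateT tateR[symmetric] tateS[symmetric]
      using a b pos unfolding h0_def h1_def by (simp add: field_simps power2_eq_square)
  qed
  have P4: "iso_to_dual q r s \<longrightarrow> m * d ^ 2 / (rr * S ^ 2) = 1 \<and> reg_const_finite q r s = 1"
  proof
    assume iso: "iso_to_dual q r s"
    have "h0 = h1" unfolding h0_def h1_def using iso_h[OF iso] by simp
    then show "m * d ^ 2 / (rr * S ^ 2) = 1 \<and> reg_const_finite q r s = 1"
      using P1 P2 pos by simp
  qed
  have P3': "reg_const_finite q r s = theta_prod q (\<lambda>H. real (tate_m1 r s H)) / theta_prod q (\<lambda>H. real (tate0 r s H))"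
    using P2 P3 by simp
  show ?thesis using P1 P2 P3' P4 unfolding m_def d_def rr_def S_def h0_def h1_def by blast
qed


end
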